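(* For every integer $n\ge 4$ there exist $n$ pairwise distinct parallel lines in the plane such that there is no regular $n$-gon whose $n$ vertices lie one on each of these lines. *)

theory Defs
  imports Complex_Main
begin

text \<open>The plane is identified with the complex numbers.
  The line through the point a with direction vector d (d nonzero).\<close>
definition line :: "complex \<Rightarrow> complex \<Rightarrow> complex set" where
  "line a d = {a + complex_of_real t * d | t. True}"

text \<open>P 0, ..., P (n-1) are the vertices (in cyclic order) of a regular n-gon:
  a centre c and a nonzero complex number z (radius and rotation) such that
  P k = c + z * exp(2 pi i k / n).\<close>
definition regular_ngon :: "nat \<Rightarrow> (nat \<Rightarrow> complex) \<Rightarrow> bool" where
  "regular_ngon n P \<longleftrightarrow> (\<exists>c z. z \<noteq> 0 \<and>
     (\<forall>k<n. P k = c + z * cis (2 * pi * real k / real n)))"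

end

theory Submission
  imports Defs
begin

lemma root_sum_zero:
  assumes "0 < j" "j < n"
  shows "(\<Sum>k<n. cis (2 * pi * real (j*k) / real n)) = 0"
proof -
  define w where "w = cis (2 * pi * real j / real n)"
  have pw: "cis (2 * pi * real (j*k) / real n) = w ^ k" for k
    unfolding w_def DeMoivre by (simp add: field_simps)
  have c1: "cis (real j * (2 * pi)) = 1"
    using DeMoivre[of "2*pi" j] by simp
  have wn: "w ^ n = 1" unfolding w_def DeMoivre using assms c1
    by (simp add: field_simps)
  have "w \<noteq> 1"
  proof
    assume "w = 1"
    hence "cos (2 * pi * real j / real n) = 1" unfolding w_def
      using arg_cong[OF \<open>w = 1\<close>, of Re] by (simp add: w_def cis.code complex_eq_iff)
    then obtain m :: int where m: "2 * pi * real j / real n = real_of_int m * (2 * pi)"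
      using cos_one_2pi_int by (metis mult.assoc)
    hence "real j / real n = real_of_int m" using assms by (simp add: field_simps)
    moreover have "0 < real j / real n" "real j / real n < 1" using assms by auto
    ultimately show False by (metis of_int_0_less_iff of_int_less_1_iff not_less zero_less_iff_neq_zero int_one_le_iff_zero_less less_le_not_le)
  qed
  have "(\<Sum>k<n. cis (2 * pi * real (j*k) / real n)) = (\<Sum>k<n. w ^ k)"
    using pw by simp
  also have "\<dots> = 0" using geometric_sum[OF \<open>w \<noteq> 1\<close>] wn by simp
  finally show ?thesis .
qed

lemma im_cube: "Im w ^ 3 = (3 * (cmod w)^2 * Im w - Im (w ^ 3)) / 4"
proof (cases w)
  case (Complex a b)
  have "(cmod w)^2 = a^2 + b^2" using Complex by (simp add: cmod_power2)
  thus ?thesis using Complex by (simp add: power3_eq_cube power2_eq_square algebra_simps)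
qed

lemma cube_sum: "(\<Sum>i<n. (real i)^3) = (real n * (real n - 1) / 2)^2"
  by (induction n) (simp_all add: power2_eq_square power3_eq_cube algebra_simps)

lemma lin_sum: "(\<Sum>i<n. real i) = real n * (real n - 1) / 2"
  by (induction n) (simp_all add: algebra_simps)

theorem mainTheorem2:
  fixes n :: nat
  assumes "n \<ge> 4"
  shows "\<exists>(d::complex) (a::nat \<Rightarrow> complex). d \<noteq> 0 \<and>
           (\<forall>i<n. \<forall>j<n. i \<noteq> j \<longrightarrow> line (a i) d \<noteq> line (a j) d) \<and>
           \<not> (\<exists>P \<sigma>. regular_ngon n P \<and> bij_betw \<sigma> {..<n} {..<n} \<and>
                   (\<forall>k<n. P k \<in> line (a (\<sigma> k)) d))"
proof -
  define T where "T = real n * (real n - 1) / 2"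
  define b where "b i = (if i = 0 then - T else real i)" for i :: nat
  define a where "a i = complex_of_real (b i) * \<i>" for i
  have T6: "T \<ge> 6"
  proof -
    have "real n \<ge> 4" using assms by simp
    hence "real n * (real n - 1) \<ge> 4 * 3" by (intro mult_mono) auto
    thus ?thesis unfolding T_def by simp
  qed
  have Imline: "Im x = b i" if "x \<in> line (a i) 1" for x i
    using that unfolding line_def a_def by auto
  have bdist: "b i \<noteq> b j" if "i \<noteq> j" for i j
    using that T6 unfolding b_def by auto
  have lines: "line (a i) 1 \<noteq> line (a j) 1" if "i \<noteq> j" for i j
  proof
    assume eq: "line (a i) 1 = line (a j) 1"
    have "a i \<in> line (a i) 1" unfolding line_def by (auto intro: exI[of _ 0])
    hence "Im (a i) = b j" using eq Imline by auto
    moreover have "Im (a i) = b i" unfolding a_def by simp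
    ultimately show False using bdist that by simp
  qed
  have sumb: "(\<Sum>i<n. b i) = 0"
  proof -
    have "(\<Sum>i<n. b i) = (\<Sum>i<n. real i) - real 0 + b 0"
      using assms by (simp add: sum.remove[of "{..<n}" 0] b_def)
    thus ?thesis using lin_sum[of n] by (simp add: T_def b_def)
  qed
  have sumb3: "(\<Sum>i<n. (b i)^3) \<noteq> 0"
  proof -
    have "(\<Sum>i<n. (b i)^3) = (\<Sum>i<n. (real i)^3) - real 0 ^ 3 + b 0 ^ 3"
      using assms by (simp add: sum.remove[of "{..<n}" 0] b_def)
    also have "\<dots> = T^2 - T^3" using cube_sum[of n] by (simp add: T_def b_def)
    also have "\<dots> = T^2 * (1 - T)" by (simp add: algebra_simps power2_eq_square power3_eq_cube)
    finally show ?thesis using T6 by simp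
  qed
  have noP: False if reg: "regular_ngon n P" and bij: "bij_betw \<sigma> {..<n} {..<n}"
      and on: "\<forall>k<n. P k \<in> line (a (\<sigma> k)) 1" for P \<sigma>
  proof -
    obtain c z where z: "z \<noteq> 0" and Pk: "\<forall>k<n. P k = c + z * cis (2 * pi * real k / real n)"
      using reg unfolding regular_ngon_def by blast
    define u where "u k = Im (z * cis (2 * pi * real k / real n))" for k
    have ImP: "b (\<sigma> k) = Im c + u k" if "k < n" for k
      using Imline[of "P k" "\<sigma> k"] on Pk that unfolding u_def by auto
    have s1: "(\<Sum>k<n. cis (2 * pi * real k / real n)) = 0"
      using root_sum_zero[of 1 n] assms by simp
    have s3: "(\<Sum>k<n. cis (2 * pi * real (3*k) / real n)) = 0"
      using root_sum_zero[of 3 n] assms by simp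
    have su: "(\<Sum>k<n. u k) = 0"
    proof -
      have "(\<Sum>k<n. u k) = Im (z * (\<Sum>k<n. cis (2 * pi * real k / real n)))"
        unfolding u_def by (simp add: sum_distrib_left Im_sum)
      thus ?thesis using s1 by simp
    qed
    have su3: "(\<Sum>k<n. (u k)^3) = 0"
    proof -
      have cu: "(z * cis (2 * pi * real k / real n))^3 = z^3 * cis (2 * pi * real (3*k) / real n)" for k
        by (simp add: power_mult_distrib DeMoivre field_simps)
      have nm: "cmod (z * cis (2 * pi * real k / real n)) = cmod z" for k
        by (simp add: norm_mult)
      have "(\<Sum>k<n. (u k)^3) = (\<Sum>k<n. (3 * (cmod z)^2 * u k - Im (z^3 * cis (2 * pi * real (3*k) / real n))) / 4)"
        unfolding u_def by (intro sum.cong refl) (simp only: im_cube nm cu)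
      also have "\<dots> = (3 * (cmod z)^2 * (\<Sum>k<n. u k) - Im (z^3 * (\<Sum>k<n. cis (2 * pi * real (3*k) / real n)))) / 4"
        by (simp only: sum_divide_distrib[symmetric] sum_subtractf sum_distrib_left[symmetric] Im_sum[symmetric] mult.assoc)
      also have "\<dots> = 0" using su s3 by simp
      finally show ?thesis .
    qed
    have "(\<Sum>k<n. b (\<sigma> k)) = (\<Sum>i<n. b i)" using sum.reindex_bij_betw[OF bij] by simp
    hence "(\<Sum>k<n. Im c + u k) = 0" using ImP sumb by simp
    hence "real n * Im c = 0" using su by (simp add: sum.distrib)
    hence c0: "Im c = 0" using assms by simp
    have "(\<Sum>k<n. (b (\<sigma> k))^3) = (\<Sum>i<n. (b i)^3)"
      using sum.reindex_bij_betw[OF bij, of "\<lambda>i. (b i)^3"] by simp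
    moreover have "(\<Sum>k<n. (b (\<sigma> k))^3) = (\<Sum>k<n. (u k)^3)"
      using ImP c0 by simp
    ultimately show False using su3 sumb3 by simp
  qed
  show ?thesis
  proof (intro exI[of _ 1] exI[of _ a] conjI allI impI)
    show "(1::complex) \<noteq> 0" by simp
    show "line (a i) 1 \<noteq> line (a j) 1" if "i \<noteq> j" for i j using lines that by simp
    show "\<not> (\<exists>P \<sigma>. regular_ngon n P \<and> bij_betw \<sigma> {..<n} {..<n} \<and>
                   (\<forall>k<n. P k \<in> line (a (\<sigma> k)) 1))"
      using noP by metis
  qed
qed

end
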